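(* Let $n=5$, $x_i=i$ for $i=1,\dots,5$, and $Y_i=\beta_0+\beta_1x_i+\varepsilon_i$ with unknown $\beta_0,\beta_1\in\mathbb{R}$ and $\varepsilon_1,\dots,\varepsilon_5$ i.i.d. with a continuous distribution. Let $s_1<s_2<\cdots<s_{10}$ be the ten slopes $S_{ij}=(Y_i-Y_j)/(x_i-x_j)$, $i<j$, sorted increasingly. Then $$p_4:=P\bigl(\beta_1\in(s_1,s_{10})\wedge s_1+s_9<2s_2\wedge 2s_9<s_2+s_{10}\bigr)=0.$$
   Context: Ties among the slopes occur with probability zero and are ignored. *)

theory Defs
  imports "HOL-Probability.Probability"
begin

text \<open>The ten pairwise slopes (Y i - Y j)/(x i - x j), 1 <= i < j <= 5, with x i = i,
  sorted increasingly; s_k of the paper is element k-1 of this list.\<close>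
definition slopes :: "(nat \<Rightarrow> real) \<Rightarrow> real list" where
  "slopes Y = sort [(Y i - Y j) / (real i - real j). i \<leftarrow> [1..<6], j \<leftarrow> [Suc i..<6]]"

end

theory Submission
  imports Defs
begin

lemma sorted_nl: "sorted (s::real list) \<Longrightarrow> i \<le> j \<Longrightarrow> j < length s \<Longrightarrow> \<not> s!j < s!i"
  by (simp add: not_less sorted_nth_mono)

lemma sorted_filter_less:
  fixes s :: "real list"
  assumes "sorted s" "k < length s"
  shows "length (filter (\<lambda>x. x < s!k) s) \<le> k"
proof -
  have "filter (\<lambda>x. x < s!k) (drop k s) = []"
  proof -
    have "\<forall>y\<in>set (drop k s). \<not> y < s!k"
      proof
      fix y assume "y \<in> set (drop k s)"
      then obtain i where "i < length s - k" "y = s!(k+i)" by (auto simp: set_conv_nth)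
      thus "\<not> y < s!k" using assms sorted_nl[of s k "k+i"] by auto
    qed
    thus ?thesis by (simp add: filter_empty_conv)
  qed
  hence "length (filter (\<lambda>x. x < s!k) s) = length (filter (\<lambda>x. x < s!k) (take k s))"
    by (metis append_Nil2 append_take_drop_id filter_append)
  also have "\<dots> \<le> length (take k s)" by (rule length_filter_le)
  also have "\<dots> \<le> k" by simp
  finally show ?thesis .
qed

lemma sorted_filter_greater:
  fixes s :: "real list"
  assumes "sorted s" "k < length s"
  shows "length (filter (\<lambda>x. x > s!k) s) \<le> length s - Suc k"
proof -
  have "filter (\<lambda>x. x > s!k) (take (Suc k) s) = []"
  proof -
    have "\<forall>y\<in>set (take (Suc k) s). \<not> y > s!k"
      proof
      fix y assume "y \<in> set (take (Suc k) s)"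
      then obtain i where "i < Suc k" "i < length s" "y = s!i" by (auto simp: set_conv_nth)
      thus "\<not> y > s!k" using assms sorted_nl[of s i k] by auto
    qed
    thus ?thesis by (simp add: filter_empty_conv)
  qed
  hence "length (filter (\<lambda>x. x > s!k) s) = length (filter (\<lambda>x. x > s!k) (drop (Suc k) s))"
    by (metis append_take_drop_id filter_append self_append_conv2)
  also have "\<dots> \<le> length (drop (Suc k) s)" by (rule length_filter_le)
  also have "\<dots> \<le> length s - Suc k" by simp
  finally show ?thesis .
qed

lemma two_le_filter:
  assumes "i < length xs" "j < length xs" "i \<noteq> j" "P (xs!i)" "P (xs!j)"
  shows "2 \<le> length (filter P xs)"
proof -
  have "{i,j} \<subseteq> {k. k < length xs \<and> P (xs!k)}" using assms by auto
  hence "card {i,j} \<le> card {k. k < length xs \<and> P (xs!k)}"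
    by (intro card_mono) auto
  thus ?thesis using assms(3) by (simp add: length_filter_conv_card)
qed

lemma low_pair:
  fixes xs :: "real list"
  assumes "i < length xs" "j < length xs" "i \<noteq> j" "1 < length xs"
  shows "sort xs ! 1 \<le> max (xs!i) (xs!j)"
proof (rule ccontr)
  let ?s = "sort xs"
  assume "\<not> ?thesis"
  hence "2 \<le> length (filter (\<lambda>x. x < ?s!1) xs)"
    using assms by (intro two_le_filter) auto
  moreover have "length (filter (\<lambda>x. x < ?s!1) xs) = length (filter (\<lambda>x. x < ?s!1) ?s)"
    by (metis mset_filter mset_sort size_mset)
  moreover have "length (filter (\<lambda>x. x < ?s!1) ?s) \<le> 1"
    using assms by (intro sorted_filter_less) auto
  ultimately show False by linarith
qed

lemma high_pair:
  fixes xs :: "real list"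
  assumes "i < length xs" "j < length xs" "i \<noteq> j" "k = length xs - 2" "1 < length xs"
  shows "min (xs!i) (xs!j) \<le> sort xs ! k"
proof (rule ccontr)
  let ?s = "sort xs"
  assume "\<not> ?thesis"
  hence "2 \<le> length (filter (\<lambda>x. x > ?s!k) xs)"
    using assms by (intro two_le_filter) auto
  moreover have "length (filter (\<lambda>x. x > ?s!k) xs) = length (filter (\<lambda>x. x > ?s!k) ?s)"
    by (metis mset_filter mset_sort size_mset)
  moreover have "length (filter (\<lambda>x. x > ?s!k) ?s) \<le> length ?s - Suc k"
    using assms by (intro sorted_filter_greater) auto
  ultimately show False using assms by simp
qed

lemma sort_first:
  fixes xs :: "real list"
  assumes "x \<in> set xs" shows "sort xs ! 0 \<le> x"
proof -
  from assms obtain i where "i < length (sort xs)" "sort xs ! i = x"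
    by (metis in_set_conv_nth set_sort)
  thus ?thesis by (metis le0 sorted_nth_mono sorted_sort)
qed

lemma sort_last:
  fixes xs :: "real list"
  assumes "x \<in> set xs" "length xs = Suc k" shows "x \<le> sort xs ! k"
proof -
  from assms obtain i where "i < length (sort xs)" "sort xs ! i = x"
    by (metis in_set_conv_nth set_sort)
  thus ?thesis using assms(2) by (metis length_sort less_Suc_eq_le lessI sorted_nth_mono sorted_sort)
qed

lemma key:
  fixes Y :: "nat \<Rightarrow> real"
  assumes "slopes Y ! 0 + slopes Y ! 8 < 2 * slopes Y ! 1"
      and "2 * slopes Y ! 8 < slopes Y ! 1 + slopes Y ! 9"
  shows False
proof -
  define a where "a = Y 2 - Y 1"
  define b where "b = Y 3 - Y 2"
  define c where "c = Y 4 - Y 3"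
  define d where "d = Y 5 - Y 4"
  define xs :: "real list" where "xs = [a, (a+b)/2, (a+b+c)/3, (a+b+c+d)/4, b, (b+c)/2, (b+c+d)/3, c, (c+d)/2, d]"
  have ls: "[(Y i - Y j) / (real i - real j). i \<leftarrow> [1..<6], j \<leftarrow> [Suc i..<6]] = xs"
    unfolding xs_def a_def b_def c_def d_def
    by (simp add: upt_rec eval_nat_numeral) (simp add: field_simps)
  have sl: "slopes Y = sort xs"
    unfolding slopes_def ls ..
  define s0 where "s0 = sort xs ! 0"
  define s1 where "s1 = sort xs ! 1"
  define s8 where "s8 = sort xs ! 8"
  define s9 where "s9 = sort xs ! 9"
  have len: "length xs = 10" by (simp add: xs_def)
  have A: "s0 + s8 < 2 * s1" "2 * s8 < s1 + s9" using assms by (simp_all add: sl s0_def s1_def s8_def s9_def)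
  have L: "\<And>i j. i < 10 \<Longrightarrow> j < 10 \<Longrightarrow> i \<noteq> j \<Longrightarrow> s1 \<le> max (xs!i) (xs!j)"
    unfolding s1_def using len by (intro low_pair) auto
  have H: "\<And>i j. i < 10 \<Longrightarrow> j < 10 \<Longrightarrow> i \<noteq> j \<Longrightarrow> min (xs!i) (xs!j) \<le> s8"
    unfolding s8_def using len by (intro high_pair) auto
  have s01: "s0 \<le> s1" "s1 \<le> s8" "s8 \<le> s9"
    unfolding s0_def s1_def s8_def s9_def using len
    by (auto intro!: sorted_nth_mono)
  have s0le: "\<forall>x\<in>set xs. s0 \<le> x" unfolding s0_def using len
    by (auto intro: sort_first)
  have s9ge: "\<forall>x\<in>set xs. x \<le> s9" unfolding s9_def using len
    by (auto intro: sort_last)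
  have s0in: "s0 \<in> set xs" unfolding s0_def using len
    using nth_mem[of 0 "sort xs"] by simp
  have s9in: "s9 \<in> set xs" unfolding s9_def using len
    using nth_mem[of 9 "sort xs"] by simp
  note F = L[of 0 4] L[of 0 7] L[of 0 9] L[of 4 7] L[of 4 9] L[of 7 9] L[of 0 1] L[of 4 1] L[of 4 5] L[of 7 5] L[of 7 8] L[of 9 8] H[of 0 4] H[of 0 7] H[of 0 9] H[of 4 7] H[of 4 9] H[of 7 9] H[of 0 1] H[of 4 1] H[of 4 5] H[of 7 5] H[of 7 8] H[of 9 8]
  note G = F[unfolded xs_def, simplified]
  have p: "s0 = a \<or> s0 = b \<or> s0 = c \<or> s0 = d"
    using s0in s0le unfolding xs_def by auto
  have q: "s9 = a \<or> s9 = b \<or> s9 = c \<or> s9 = d"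
    using s9in s9ge unfolding xs_def by auto
  have ms: "s0 \<le> a" "s0 \<le> b" "s0 \<le> c" "s0 \<le> d" "a \<le> s9" "b \<le> s9" "c \<le> s9" "d \<le> s9"
    using s0le s9ge unfolding xs_def by auto
  show False using p q
  proof (elim disjE)
    assume "s0 = a" "s9 = a"
    then show False using ms A s01 by linarith
  next
    assume "s0 = a" "s9 = b"
    then show False using G(2) G(21) ms A s01 by (auto simp: max_def min_def split: if_splits)
  next
    assume "s0 = a" "s9 = c"
    then show False using G(7) G(16) ms A s01 by (auto simp: max_def min_def split: if_splits)
  next
    assume "s0 = a" "s9 = d"
    then show False using G(7) G(17) ms A s01 by (auto simp: max_def min_def split: if_splits)
  next
    assume "s0 = b" "s9 = a"
    then show False using G(9) G(14) ms A s01 by (auto simp: max_def min_def split: if_splits)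
  next
    assume "s0 = b" "s9 = b"
    then show False using ms A s01 by linarith
  next
    assume "s0 = b" "s9 = c"
    then show False using G(8) G(14) ms A s01 by (auto simp: max_def min_def split: if_splits)
  next
    assume "s0 = b" "s9 = d"
    then show False using G(8) G(15) ms A s01 by (auto simp: max_def min_def split: if_splits)
  next
    assume "s0 = c" "s9 = a"
    then show False using G(10) G(13) ms A s01 by (auto simp: max_def min_def split: if_splits)
  next
    assume "s0 = c" "s9 = b"
    then show False using G(11) G(17) ms A s01 by (auto simp: max_def min_def split: if_splits)
  next
    assume "s0 = c" "s9 = c"
    then show False using ms A s01 by linarith
  next
    assume "s0 = c" "s9 = d"
    then show False using G(10) G(17) ms A s01 by (auto simp: max_def min_def split: if_splits)
  next
    assume "s0 = d" "s9 = a"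
    then show False using G(12) G(14) ms A s01 by (auto simp: max_def min_def split: if_splits)
  next
    assume "s0 = d" "s9 = b"
    then show False using G(12) G(16) ms A s01 by (auto simp: max_def min_def split: if_splits)
  next
    assume "s0 = d" "s9 = c"
    then show False using G(5) G(22) ms A s01 by (auto simp: max_def min_def split: if_splits)
  next
    assume "s0 = d" "s9 = d"
    then show False using ms A s01 by linarith
  qed
qed

theorem theorem6:
  fixes M :: "'a measure" and \<epsilon> :: "nat \<Rightarrow> 'a \<Rightarrow> real" and \<beta>0 \<beta>1 :: real
  assumes "prob_space M"
    and "prob_space.indep_vars M (\<lambda>_. borel) \<epsilon> {1..5}"
    and "\<forall>i\<in>{1..5}. distr M borel (\<epsilon> i) = distr M borel (\<epsilon> 1)"
    and "\<forall>x. measure M {\<omega> \<in> space M. \<epsilon> 1 \<omega> = x} = 0"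
  shows "let E = {\<omega> \<in> space M.
                   let s = slopes (\<lambda>i. \<beta>0 + \<beta>1 * real i + \<epsilon> i \<omega>)
                   in s!0 < \<beta>1 \<and> \<beta>1 < s!9 \<and> s!0 + s!8 < 2 * s!1 \<and> 2 * s!8 < s!1 + s!9}
         in E \<in> sets M \<and> measure M E = 0"
proof -
  have "{\<omega> \<in> space M.
                   let s = slopes (\<lambda>i. \<beta>0 + \<beta>1 * real i + \<epsilon> i \<omega>)
                   in s!0 < \<beta>1 \<and> \<beta>1 < s!9 \<and> s!0 + s!8 < 2 * s!1 \<and> 2 * s!8 < s!1 + s!9} = {}"
    using key by (auto simp: Let_def)
  note e = this[unfolded Let_def]
  show ?thesis unfolding Let_def by (simp only: e) simp
qed

end
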